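(* The cardinality $|\mathcal{D}|$ of the collection of drawable sets is strictly less than the cardinality of the collection of convex subsets of $\mathbb{R}^2$. In particular, not every convex subset of $\mathbb{R}^2$ is drawable (indeed most are not).
   Context: For $A\subseteq\mathbb{R}^2$ let $N(A)=\{x\in\mathbb{R}^2: |x-a|<1 \text{ for some } a\in A\}$. Let $\mathcal{D}_1=\{N(A_1): A_1\subseteq\mathbb{R}^2\}$ and for $n\ge 2$ let $\mathcal{D}_n=\{D\cup N(A_n): D\in\mathcal{D}_{n-1}, A_n\subseteq\mathbb{R}^2\}$ if $n$ is odd and $\mathcal{D}_n=\{D\setminus N(A_n): D\in\mathcal{D}_{n-1}, A_n\subseteq\mathbb{R}^2\}$ if $n$ is even. A set is drawable if it lies in $\mathcal{D}=\bigcup_{n\ge1}\mathcal{D}_n$. *)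

theory Defs
  imports "HOL-Analysis.Analysis"
begin

definition nbhd :: "(real^2) set \<Rightarrow> (real^2) set" where
  "nbhd A = {x. \<exists>a\<in>A. dist x a < 1}"

text \<open>drawable_level n is the family D_n of the paper (D_0 is empty and unused).\<close>
primrec drawable_level :: "nat \<Rightarrow> (real^2) set set" where
  "drawable_level 0 = {}"
| "drawable_level (Suc n) =
     (if n = 0 then {nbhd A | A. True}
      else if odd (Suc n) then {D \<union> nbhd A | D A. D \<in> drawable_level n}
      else {D - nbhd A | D A. D \<in> drawable_level n})"

definition drawable :: "(real^2) set \<Rightarrow> bool" where
  "drawable S \<longleftrightarrow> (\<exists>n\<ge>1. S \<in> drawable_level n)"

end

theory Submission
  imports Defs
begin

lemma lepoll_card: "A \<lesssim> B \<Longrightarrow> (card_of A, card_of B) \<in> ordLeq"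
  unfolding lepoll_def using card_of_ordLeq by blast

fun build :: "nat \<Rightarrow> (nat \<Rightarrow> (real^2) set) \<Rightarrow> (real^2) set" where
  "build 0 f = {}"
| "build (Suc n) f = (if n = 0 then f 0 else if odd (Suc n) then build n f \<union> f n else build n f - f n)"

lemma build_cong: "(\<And>i. i < n \<Longrightarrow> f i = g i) \<Longrightarrow> build n f = build n g"
  by (induction n) auto

lemma open_nbhd: "open (nbhd A)"
proof -
  have "nbhd A = (\<Union>a\<in>A. ball a 1)" by (auto simp: nbhd_def dist_commute)
  thus ?thesis by auto
qed

lemma level_build: "S \<in> drawable_level n \<Longrightarrow> \<exists>f. (\<forall>i. open (f i)) \<and> S = build n f"
proof (induction n arbitrary: S)
  case 0
  then show ?case by simp
next
  case (Suc n)
  show ?case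
  proof (cases "n = 0")
    case True
    then obtain A where "S = nbhd A" using Suc.prems by auto
    then show ?thesis using True open_nbhd
      by (intro exI[of _ "\<lambda>_. nbhd A"]) auto
  next
    case False
    then obtain D A where DA: "D \<in> drawable_level n"
      "S = (if odd (Suc n) then D \<union> nbhd A else D - nbhd A)"
      using Suc.prems by (auto split: if_splits)
    then obtain f where f: "\<forall>i. open (f i)" "D = build n f" using Suc.IH by blast
    define g where "g = f(n := nbhd A)"
    have "build n g = build n f" by (rule build_cong) (auto simp: g_def)
    moreover have "\<forall>i. open (g i)" using f open_nbhd by (auto simp: g_def)
    moreover have "g n = nbhd A" by (simp add: g_def)
    ultimately show ?thesis using DA f False
      by (intro exI[of _ g]) auto
  qed
qed

definition parab :: "real set \<Rightarrow> (real^2) set" where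
  "parab X = {p. p$2 > (p$1)^2} \<union> {p. p$2 = (p$1)^2 \<and> p$1 \<in> X}"

lemma convex_parab: "convex (parab X)"
  unfolding convex_def
proof (intro ballI allI impI)
  fix x y :: "real^2" and u v :: real
  assume x: "x \<in> parab X" and y: "y \<in> parab X" and uv: "0 \<le> u" "0 \<le> v" "u + v = 1"
  let ?z = "u *\<^sub>R x + v *\<^sub>R y"
  have z1: "?z$1 = u * x$1 + v * y$1" and z2: "?z$2 = u * x$2 + v * y$2" by auto
  have hx: "x$2 \<ge> (x$1)^2" and hy: "y$2 \<ge> (y$1)^2" using x y by (auto simp: parab_def)
  have key: "u * x$2 + v * y$2 - (u * x$1 + v * y$1)^2
      = u * (x$2 - (x$1)^2) + v * (y$2 - (y$1)^2) + u * v * (x$1 - y$1)^2"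
  proof -
    have vv: "v = 1 - u" using uv by simp
    show ?thesis by (simp only: vv) (simp add: power2_eq_square algebra_simps)
  qed
  show "?z \<in> parab X"
  proof (cases "u = 0 \<or> v = 0")
    case True
    then show ?thesis using uv x y by auto
  next
    case False
    hence up: "u > 0" "v > 0" using uv by auto
    have t1: "u * (x$2 - (x$1)^2) \<ge> 0" "v * (y$2 - (y$1)^2) \<ge> 0" "u * v * (x$1 - y$1)^2 \<ge> 0"
      using hx hy up by auto
    show ?thesis
    proof (cases "?z$2 > (?z$1)^2")
      case True
      then show ?thesis by (simp add: parab_def)
    next
      case nt: False
      have "\<not> (u * x$1 + v * y$1)^2 < u * x$2 + v * y$2" using nt z1 z2 by metis
      hence "u * (x$2 - (x$1)^2) + v * (y$2 - (y$1)^2) + u * v * (x$1 - y$1)^2 = 0"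
        using key t1 by linarith
      hence e1: "u * (x$2 - (x$1)^2) = 0" "u * v * (x$1 - y$1)^2 = 0" "v * (y$2 - (y$1)^2) = 0"
        using t1 by linarith+
      hence ex: "x$2 = (x$1)^2" "x$1 = y$1" "y$2 = (y$1)^2" using up by auto
      have "?z$1 = (u + v) * x$1" using z1 ex by (simp add: algebra_simps)
      moreover have "?z$2 = (u + v) * x$2" using z2 ex by (simp add: algebra_simps)
      ultimately have "?z$1 = x$1" "?z$2 = x$2" using uv by auto
      then show ?thesis using x by (auto simp: parab_def)
    qed
  qed
qed

lemma inj_parab: "inj parab"
proof (rule injI)
  fix X Y assume e: "parab X = parab Y"
  show "X = Y"
  proof (intro set_eqI iffI)
    fix t assume "t \<in> X"
    hence "vector [t, t^2] \<in> parab X" by (simp add: parab_def vector_2)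
    hence "(vector [t, t^2] :: real^2) \<in> parab Y" using e by simp
    thus "t \<in> Y" by (auto simp: parab_def vector_2)
  next
    fix t assume "t \<in> Y"
    hence "vector [t, t^2] \<in> parab Y" by (simp add: parab_def vector_2)
    hence "(vector [t, t^2] :: real^2) \<in> parab X" using e by simp
    thus "t \<in> X" by (auto simp: parab_def vector_2)
  qed
qed

lemma convex_big: "(UNIV :: real set set) \<lesssim> {S :: (real^2) set. convex S}"
  unfolding lepoll_def using inj_parab convex_parab by (intro exI[of _ parab]) auto

definition enc :: "(nat \<Rightarrow> 'a set) \<Rightarrow> nat \<times> (nat \<Rightarrow> 'a set) \<Rightarrow> nat set" where
  "enc b p = {prod_encode (0, fst p)} \<union> (\<lambda>(k,m). prod_encode (Suc k, m)) ` {(k,m). b m \<subseteq> snd p k}"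
lemma enc_mem1: "prod_encode (Suc k, m) \<in> enc b (n, f) \<longleftrightarrow> b m \<subseteq> f k"
  by (auto simp: enc_def prod_encode_eq)
lemma enc_mem0: "prod_encode (0, n') \<in> enc b (n, f) \<longleftrightarrow> n' = n"
  by (auto simp: enc_def prod_encode_eq)
lemma rep_eq:
  assumes "S = \<Union>{b m | m. b m \<subseteq> S}" "S' = \<Union>{b m | m. b m \<subseteq> S'}"
   "\<And>m. b m \<subseteq> S \<longleftrightarrow> b m \<subseteq> S'"
  shows "S = S'"
  using assms by simp

lemma drawable_small: "{S :: (real^2) set. drawable S} \<lesssim> (UNIV :: nat set set)"
proof -
  obtain B :: "(real^2) set set" where B: "countable B" "\<And>C. C \<in> B \<Longrightarrow> open C"
    "\<And>S. open S \<Longrightarrow> \<exists>U. U \<subseteq> B \<and> S = \<Union>U"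
    using univ_second_countable by blast
  have "B \<noteq> {}"
  proof
    assume "B = {}"
    with B(3)[of UNIV] show False by blast
  qed
  define b where "b = from_nat_into B"
  have rb: "range b = B" unfolding b_def by (rule range_from_nat_into[OF \<open>B \<noteq> {}\<close> B(1)])
  have rep: "S = \<Union>{b m | m. b m \<subseteq> S}" if "open S" for S
  proof
    show "\<Union>{b m | m. b m \<subseteq> S} \<subseteq> S" by auto
    show "S \<subseteq> \<Union>{b m | m. b m \<subseteq> S}"
    proof
      fix x assume "x \<in> S"
      obtain U where U: "U \<subseteq> B" "S = \<Union>U" using B(3) \<open>open S\<close> by blast
      then obtain C where "C \<in> U" "x \<in> C" using \<open>x \<in> S\<close> by auto
      then obtain m where "C = b m" using U rb by auto
      thus "x \<in> \<Union>{b m | m. b m \<subseteq> S}" using \<open>C \<in> U\<close> \<open>x \<in> C\<close> U by auto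
    qed
  qed
  define T where "T = (UNIV :: nat set) \<times> {f :: nat \<Rightarrow> (real^2) set. \<forall>i. open (f i)}"
  have "inj_on (enc b) T"
  proof (rule inj_onI)
    fix p q assume p: "p \<in> T" and q: "q \<in> T" and e: "enc b p = enc b q"
    obtain n f where pn: "p = (n, f)" by (cases p)
    obtain n' f' where qn: "q = (n', f')" by (cases q)
    have e2: "enc b (n, f) = enc b (n', f')" using e pn qn by simp
    have "n = n'" using e2 enc_mem0[of n b n f] enc_mem0[of n b n' f'] by simp
    have "f k = f' k" for k
    proof -
      have "open (f k)" "open (f' k)" using p q pn qn by (auto simp: T_def)
      moreover have "b m \<subseteq> f k \<longleftrightarrow> b m \<subseteq> f' k" for m
        using e2 enc_mem1[of k m b n f] enc_mem1[of k m b n' f'] by simp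
      ultimately show ?thesis using rep_eq[of "f k" b "f' k"] rep by blast
    qed
    thus "p = q" using pn qn \<open>n = n'\<close> by auto
  qed
  hence T_small: "T \<lesssim> (UNIV :: nat set set)" unfolding lepoll_def by blast
  have "{S :: (real^2) set. drawable S} \<subseteq> (\<lambda>(n, f). build n f) ` T"
  proof
    fix S assume "S \<in> {S :: (real^2) set. drawable S}"
    then obtain n where "S \<in> drawable_level n" by (auto simp: drawable_def)
    then obtain f where "\<forall>i. open (f i)" "S = build n f" using level_build by blast
    thus "S \<in> (\<lambda>(n, f). build n f) ` T" unfolding T_def by force
  qed
  hence "{S :: (real^2) set. drawable S} \<lesssim> (\<lambda>(n, f). build n f) ` T"
    by (rule subset_imp_lepoll)
  hence "{S :: (real^2) set. drawable S} \<lesssim> T"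
    using image_lepoll by (rule lepoll_trans)
  thus ?thesis using T_small by (rule lepoll_trans)
qed

theorem corollary2p3:
  shows "(card_of {S :: (real^2) set. drawable S}, card_of {S :: (real^2) set. convex S}) \<in> ordLess"
proof -
  have a: "(card_of {S :: (real^2) set. drawable S}, card_of (UNIV :: real set)) \<in> ordLeq"
    by (rule lepoll_card, rule lepoll_trans[OF drawable_small], rule eqpoll_imp_lepoll, rule nat_sets_eqpoll_reals)
  have b: "(card_of (UNIV :: real set), card_of (Pow (UNIV :: real set))) \<in> ordLess"
    by (rule card_of_Pow)
  have c: "(card_of (Pow (UNIV :: real set)), card_of {S :: (real^2) set. convex S}) \<in> ordLeq"
    using lepoll_card[OF convex_big] by simp
  show ?thesis by (rule ordLeq_ordLess_trans[OF a ordLess_ordLeq_trans[OF b c]])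
qed

end
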